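(* Let $0\le r\le n$, $A\in\mathcal{A}_{n+1,r+1}$, and fix a tiling of $\Gamma(X(A))$. Consider the labels of the northwest boundary edges at the termination of the fusion-exchange algorithm applied to $A$, and let $L$ and $J$ be two such labels with $J\succ L$. Then: (i) if $L$ and $J$ both label horizontal edges, the edge labeled $J$ is east of the edge labeled $L$; (ii) if $L$ and $J$ both label vertical edges, the edge labeled $J$ is south of the edge labeled $L$; (iii) if $L$ and $J$ both label diagonal edges, the edge labeled $J$ is north of the edge labeled $L$.
   Context: Words and diagrams. For $0\le r\le n$ let $B_n^r$ be the set of words $X\in\{H,L,0\}^n$ with exactly $r$ letters $L$. If $X$ has $k$ letters $H$, $r$ letters $L$ and $\ell$ letters $0$, its rhombic diagram $\Gamma(X)$ is the closed region bounded by two paths of unit steps, using the directions west (horizontal), south (vertical) and southwest (diagonal: a fixed unit vector strictly between west and south), both going from a point $P$ to a point $Q$: the northwest boundary consists of $\ell$ west steps, then $r$ southwest steps, then $k$ south steps; the southeast boundary is obtained by reading $X$ left to right and taking a west step for each $0$, a southwest step for each $L$, a south step for each $H$. A tiling of $\Gamma(X)$ is a tiling by unit rhombi of three kinds: squares (horizontal and vertical edges), tall rhombi (vertical and diagonal edges), short rhombi (horizontal and diagonal edges). Each tile has two edges on its lower-right side: its east edge (vertical for squares and tall rhombi, diagonal for short rhombi) and its south edge (horizontal for squares and short rhombi, diagonal for tall rhombi); the parallel edges on its upper-left side are its west and north edges. Assemblées. An assemblée of size $(m,s)$ is a collection of $s$ nonempty, pairwise disjoint, linearly ordered sets (blocks)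 with union $\{1,\dots,m\}$; the last element of a block is its block-end. Blocks are listed in the canonical order with decreasing block-ends, and the assemblée is identified with the concatenated word. $\mathcal{A}_{m,s}$ is the set of these. For $A\in\mathcal{A}_{n+1,r+1}$ with block-ends $b_1>\dots>b_{r+1}$, a non-block-end element $x$ is an increase if $x+1$ appears to the right of $x$ in $A$, and a decrease otherwise (so $n+1$, if not a block-end, is a decrease). $X(A)\in B_n^r$ is obtained from $A$ by deleting its last letter $b_{r+1}$ and replacing each increase by $H$, each decrease by $0$ and each remaining block-end by $L$. Fusion-exchange algorithm. A label is a finite, possibly empty, set of consecutive integers; for labels $E,S$ write $E\succ S$ if both are nonempty and $\min E=\max S+1$. Given $A\in\mathcal{A}_{n+1,r+1}$ and a tiling of $\Gamma(X(A))$: initially the southeast boundary edges, in order from $P$ to $Q$, receive the singleton labels of the letters of $A$ from left to right, $b_{r+1}$ omitted. Step: choose a tile whose east and south edges are labeled, say by $E$ and $S$, and whose west and north edges are not. (R I) If $E\succ S$ and the south edge is horizontal: west edge gets $E\cup S$, north edge gets $\emptyset$, place $\alpha$ in the tile. (R II) If $S\succ E$ and the east edge is vertical: north edge gets $E\cup S$, west edge gets $\emptyset$, place $\beta$. (R III) Otherwise: west edge gets $E$, north edge gets $S$, and place $q$ if $E\ne\emptyset$ and $S\ne\emptyset$. Repeat until every edge is labeled (termination). *)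

theory Defs
  imports Main
begin

text \<open>An assemblee of size (m,s) is represented in its canonical order: a list of
  s nonempty blocks (each block a list, i.e. a linearly ordered set), pairwise disjoint,
  with union {1..m}, listed with strictly decreasing block-ends (last elements).\<close>

definition assemblee :: "nat \<Rightarrow> nat \<Rightarrow> nat list list \<Rightarrow> bool" where
  "assemblee m s A \<longleftrightarrow>
     length A = s \<and> (\<forall>b\<in>set A. b \<noteq> []) \<and> distinct (concat A) \<and>
     set (concat A) = {1..m} \<and> sorted_wrt (>) (map last A)"

definition asm_word :: "nat list list \<Rightarrow> nat list" where
  "asm_word A = concat A"

definition block_ends :: "nat list list \<Rightarrow> nat set" where
  "block_ends A = set (map last A)"

definition is_increase :: "nat list \<Rightarrow> nat \<Rightarrow> bool" where
  "is_increase w i \<longleftrightarrow> (\<exists>j. i < j \<and> j < length w \<and> w ! j = w ! i + 1)"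

datatype letter = LH | LL | L0

definition XA :: "nat list list \<Rightarrow> letter list" where
  "XA A = (let w = asm_word A in
     map (\<lambda>i. if w ! i \<in> block_ends A then LL
               else if is_increase w i then LH else L0) [0..<length w - 1])"

datatype dir = Hor | Diag | Vert   \<comment> \<open>west, southwest, south steps\<close>

fun dir_of :: "letter \<Rightarrow> dir" where
  "dir_of L0 = Hor" | "dir_of LL = Diag" | "dir_of LH = Vert"

fun drank :: "dir \<Rightarrow> nat" where
  "drank Hor = 0" | "drank Diag = 1" | "drank Vert = 2"

text \<open>Northwest boundary of Gamma(X): l west steps, r southwest steps, k south steps.\<close>
definition nw_boundary :: "letter list \<Rightarrow> dir list" where
  "nw_boundary X = (let ds = map dir_of X in
     filter (\<lambda>d. d = Hor) ds @ filter (\<lambda>d. d = Diag) ds @ filter (\<lambda>d. d = Vert) ds)"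

text \<open>A labelled path from P to Q: list of edges (direction, label).\<close>
type_synonym lpath = "(dir \<times> nat set) list"

definition lab_succ :: "nat set \<Rightarrow> nat set \<Rightarrow> bool" where
  "lab_succ E S \<longleftrightarrow> E \<noteq> {} \<and> S \<noteq> {} \<and> Min E = Max S + 1"

text \<open>A tile can be placed on the current frontier at position i if the edges i, i+1
  are its east and south edges: (vertical, horizontal) = square,
  (vertical, diagonal) = tall rhombus, (diagonal, horizontal) = short rhombus.\<close>
definition valid_tile :: "lpath \<Rightarrow> nat \<Rightarrow> bool" where
  "valid_tile p i \<longleftrightarrow> Suc i < length p \<and> drank (fst (p ! i)) > drank (fst (p ! Suc i))"

text \<open>One step of the fusion-exchange algorithm: the east edge (position i) has label E,
  the south edge (position i+1) has label S; afterwards the frontier goes along the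
  north edge (position i) and then the west edge (position i+1).\<close>
definition fe_step :: "lpath \<Rightarrow> nat \<Rightarrow> lpath" where
  "fe_step p i = (let (de, E) = p ! i; (ds, S) = p ! Suc i;
      (W, N) = (if lab_succ E S \<and> ds = Hor then (E \<union> S, {})
                else if lab_succ S E \<and> de = Vert then ({}, E \<union> S)
                else (E, S))
    in p[i := (ds, N), Suc i := (de, W)])"

fun fe_valid :: "lpath \<Rightarrow> nat list \<Rightarrow> bool" where
  "fe_valid p [] = True"
| "fe_valid p (i # is) = (valid_tile p i \<and> fe_valid (fe_step p i) is)"

fun fe_run :: "lpath \<Rightarrow> nat list \<Rightarrow> lpath" where
  "fe_run p [] = p"
| "fe_run p (i # is) = fe_run (fe_step p i) is"

definition fe_init :: "nat list list \<Rightarrow> lpath" where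
  "fe_init A = (let w = asm_word A; X = XA A in
     map (\<lambda>i. (dir_of (X ! i), {w ! i})) [0..<length w - 1])"

text \<open>A tiling of Gamma(X(A)) together with an order of processing its tiles is a
  sequence of tile placements starting from the southeast boundary and ending at the
  northwest boundary.\<close>
definition is_tiling_order :: "nat list list \<Rightarrow> nat list \<Rightarrow> bool" where
  "is_tiling_order A ts \<longleftrightarrow> fe_valid (fe_init A) ts \<and>
     map fst (fe_run (fe_init A) ts) = nw_boundary (XA A)"

definition fe_final :: "nat list list \<Rightarrow> nat list \<Rightarrow> lpath" where
  "fe_final A ts = fe_run (fe_init A) ts"

end

theory Submission
  imports Defs
begin

lemma ls_facts:
  assumes "finite E" "finite S" "lab_succ E S"
  shows "E \<noteq> {}" "S \<noteq> {}" "Max S < Min E" "Min E \<le> Max E" "Min S \<le> Max S"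
    "Max (E \<union> S) = Max E" "Min (E \<union> S) = Min S"
proof -
  show e: "E \<noteq> {}" and s: "S \<noteq> {}" using assms(3) by (auto simp: lab_succ_def)
  show m: "Max S < Min E" using assms(3) by (auto simp: lab_succ_def)
  show m1: "Min E \<le> Max E" using e assms(1) by simp
  show m2: "Min S \<le> Max S" using s assms(2) by simp
  show "Max (E \<union> S) = Max E" using e s assms m m1 by (simp add: Max_Un)
  show "Min (E \<union> S) = Min S" using e s assms m m2 by (simp add: Min_Un)
qed

lemma ls_irrefl: "finite E \<Longrightarrow> \<not> lab_succ E E"
proof
  assume f: "finite E" and l: "lab_succ E E"
  have "Max E < Min E" "Min E \<le> Max E" using ls_facts(3,4)[OF f f l] by auto
  then show False by simp
qed

lemma ls_un_left: "finite E \<Longrightarrow> finite S \<Longrightarrow> lab_succ E S \<Longrightarrow> lab_succ J (E \<union> S) \<Longrightarrow> lab_succ J E"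
proof -
  assume f: "finite E" "finite S" and l: "lab_succ E S" and j: "lab_succ J (E \<union> S)"
  have "Max (E \<union> S) = Max E" "E \<noteq> {}" using ls_facts(1,6)[OF f l] by auto
  then show ?thesis using j unfolding lab_succ_def by simp
qed

lemma ls_un_right: "finite E \<Longrightarrow> finite S \<Longrightarrow> lab_succ E S \<Longrightarrow> lab_succ (E \<union> S) L \<Longrightarrow> lab_succ S L"
proof -
  assume f: "finite E" "finite S" and l: "lab_succ E S" and j: "lab_succ (E \<union> S) L"
  have "Min (E \<union> S) = Min S" "S \<noteq> {}" using ls_facts(2,7)[OF f l] by auto
  then show ?thesis using j unfolding lab_succ_def by simp
qed

definition inv1 :: "lpath \<Rightarrow> bool" where
"inv1 p \<longleftrightarrow> (\<forall>k<length p. finite (snd (p!k))) \<and>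
 (\<forall>a<length p. \<forall>b<length p. lab_succ (snd (p!b)) (snd (p!a)) \<longrightarrow>
    (fst (p!a) = Hor \<longrightarrow> b<a) \<and> (fst (p!a) = Vert \<longrightarrow> a<b)) \<and>
 (\<forall>a b. a<b \<longrightarrow> b<length p \<longrightarrow> fst(p!a)=Diag \<longrightarrow> fst(p!b)=Diag \<longrightarrow> snd(p!a)\<noteq>{} \<longrightarrow>
    snd(p!b)\<noteq>{} \<longrightarrow> Max(snd(p!b)) < Max(snd(p!a)))"

lemma inv1I:
  assumes "\<And>k. k<length p \<Longrightarrow> finite (snd (p!k))"
    "\<And>a b. a<length p \<Longrightarrow> b<length p \<Longrightarrow> lab_succ (snd (p!b)) (snd (p!a)) \<Longrightarrow>
    (fst (p!a) = Hor \<longrightarrow> b<a) \<and> (fst (p!a) = Vert \<longrightarrow> a<b)"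
    "\<And>a b. a<b \<Longrightarrow> b<length p \<Longrightarrow> fst(p!a)=Diag \<Longrightarrow> fst(p!b)=Diag \<Longrightarrow> snd(p!a)\<noteq>{} \<Longrightarrow>
    snd(p!b)\<noteq>{} \<Longrightarrow> Max(snd(p!b)) < Max(snd(p!a))"
  shows "inv1 p"
  using assms unfolding inv1_def by simp

lemma fe_step_cases:
  assumes "p!i = (de,E)" "p!Suc i = (ds,S)"
  shows "fe_step p i = (if lab_succ E S \<and> ds = Hor then p[i:=(ds,{}), Suc i:=(de,E\<union>S)]
     else if lab_succ S E \<and> de = Vert then p[i:=(ds,E\<union>S), Suc i := (de,{})]
     else p[i:=(ds,S), Suc i:=(de,E)])"
  by (simp add: fe_step_def assms)

lemma upd2_nth: "Suc i < length p \<Longrightarrow> p[i:=X, Suc i:=Y] ! k =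
   (if k = i then X else if k = Suc i then Y else p!k)"
  by auto

lemma inv_step:
  assumes inv: "inv1 p" and vt: "valid_tile p i"
  shows "inv1 (fe_step p i)"
proof -
  obtain de E where e: "p!i = (de,E)" by (cases "p!i") auto
  obtain ds S where s: "p!Suc i = (ds,S)" by (cases "p!Suc i") auto
  have len: "Suc i < length p" and dd: "drank de > drank ds" using vt e s by (auto simp: valid_tile_def)
  have dsV: "ds \<noteq> Vert" and deH: "de \<noteq> Hor" and dne: "de \<noteq> ds" using dd by (cases de; cases ds; auto)+
  have fin: "\<And>k. k < length p \<Longrightarrow> finite (snd (p!k))" using inv[unfolded inv1_def, THEN conjunct1] by blast
  have I2: "\<And>a b. a<length p \<Longrightarrow> b<length p \<Longrightarrow> lab_succ (snd (p!b)) (snd (p!a)) \<Longrightarrow>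
    (fst (p!a) = Hor \<longrightarrow> b<a) \<and> (fst (p!a) = Vert \<longrightarrow> a<b)" using inv[unfolded inv1_def, THEN conjunct2, THEN conjunct1] by blast
  have I3: "\<And>a b. a<b \<Longrightarrow> b<length p \<Longrightarrow> fst(p!a)=Diag \<Longrightarrow> fst(p!b)=Diag \<Longrightarrow> snd(p!a)\<noteq>{} \<Longrightarrow>
    snd(p!b)\<noteq>{} \<Longrightarrow> Max(snd(p!b)) < Max(snd(p!a))" using inv[unfolded inv1_def, THEN conjunct2, THEN conjunct2] by blast
  have fE: "finite E" and fS: "finite S" using fin[of i] fin[of "Suc i"] len e s by auto
  show ?thesis
  proof (cases "lab_succ E S \<and> ds = Hor")
    case True
    note cI = True
    let ?q = "p[i:=(ds,{}), Suc i:=(de,E\<union>S)]"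
    have q: "fe_step p i = ?q" using True by (simp add: fe_step_cases[OF e s])
    note F = ls_facts[OF fE fS conjunct1[OF True]]
    have nq: "\<And>k. ?q ! k = (if k = i then (ds,{}) else if k = Suc i then (de,E\<union>S) else p!k)"
      using len by auto
    have "inv1 ?q"
    proof (rule inv1I)
      fix k assume "k < length ?q" then show "finite (snd (?q!k))" using fin fE fS nq by auto
    next
      fix a b assume a: "a < length ?q" and b: "b < length ?q" and ls: "lab_succ (snd (?q!b)) (snd (?q!a))"
      have ai: "a \<noteq> i" "b \<noteq> i" using ls nq by (auto simp: lab_succ_def)
      show "(fst (?q!a) = Hor \<longrightarrow> b<a) \<and> (fst (?q!a) = Vert \<longrightarrow> a<b)"
      proof (cases "a = Suc i")
        case True
        then have "b \<noteq> Suc i" using ls nq ls_irrefl fE fS by auto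
        then have "lab_succ (snd (p!b)) (E \<union> S)" using ls nq True ai by simp
        then have "lab_succ (snd (p!b)) E" using ls_un_left[OF fE fS] conjunct1[OF cI] by blast
        then have "de = Vert \<longrightarrow> i < b" using I2[of i b] e len b by auto
        then show ?thesis using True nq \<open>b \<noteq> Suc i\<close> deH by auto
      next
        case False
        show ?thesis
        proof (cases "b = Suc i")
          case True
          then have "lab_succ (E \<union> S) (snd (p!a))" using ls nq False ai by simp
          then have "lab_succ S (snd (p!a))" using ls_un_right[OF fE fS] conjunct1[OF cI] by blast
          then show ?thesis using I2[of a "Suc i"] s len a True nq False ai by auto
        next
          case False
          then show ?thesis using I2[of a b] ls nq \<open>a \<noteq> Suc i\<close> ai a b by auto
        qed
      qed
    next
      fix a b assume ab: "a < b" and b: "b < length ?q" and da: "fst (?q!a) = Diag" and db: "fst (?q!b) = Diag"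
        and na: "snd (?q!a) \<noteq> {}" and nb: "snd (?q!b) \<noteq> {}"
      have ai: "a \<noteq> i" "b \<noteq> i" using na nb nq by auto
      show "Max (snd (?q!b)) < Max (snd (?q!a))"
      proof (cases "a = Suc i")
        case True
        then show ?thesis using I3[of i b] ab b da db na nb nq ai e F len by auto
      next
        case False
        show ?thesis
        proof (cases "b = Suc i")
          case True
          then show ?thesis using I3[of a i] ab b da db na nb nq ai e F len False by auto
        next
          case False
          then show ?thesis using I3[of a b] ab b da db na nb nq ai \<open>a \<noteq> Suc i\<close> by auto
        qed
      qed
    qed
    then show ?thesis using q by simp
  next
    case nI: False
    show ?thesis
    proof (cases "lab_succ S E \<and> de = Vert")
      case True
      note cI = True
      let ?q = "p[i:=(ds,E\<union>S), Suc i:=(de,{})]"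
      have c1: "(lab_succ E S \<and> ds = Hor) = False" using nI by simp
      have c2: "(lab_succ S E \<and> de = Vert) = True" using True by simp
      have q: "fe_step p i = ?q" unfolding fe_step_cases[OF e s] c1 c2 if_False if_True ..
      note F = ls_facts[OF fS fE conjunct1[OF True]]
      have U: "E \<union> S = S \<union> E" by blast
      have nq: "\<And>k. ?q ! k = (if k = i then (ds,S \<union> E) else if k = Suc i then (de,{}) else p!k)"
        using len U by auto
      have "inv1 ?q"
      proof (rule inv1I)
        fix k assume "k < length ?q" then show "finite (snd (?q!k))" using fin fE fS nq by auto
      next
        fix a b assume a: "a < length ?q" and b: "b < length ?q" and ls: "lab_succ (snd (?q!b)) (snd (?q!a))"
        have ai: "a \<noteq> Suc i" "b \<noteq> Suc i" using ls nq by (auto simp: lab_succ_def)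
        show "(fst (?q!a) = Hor \<longrightarrow> b<a) \<and> (fst (?q!a) = Vert \<longrightarrow> a<b)"
        proof (cases "a = i")
          case True
          then have "b \<noteq> i" using ls nq ls_irrefl fE fS by auto
          then have "lab_succ (snd (p!b)) (S \<union> E)" using ls nq True ai by simp
          then have "lab_succ (snd (p!b)) S" using ls_un_left[OF fS fE] conjunct1[OF cI] by blast
          then have "ds = Hor \<longrightarrow> b < Suc i" using I2[of "Suc i" b] s len b by auto
          then show ?thesis using True nq \<open>b \<noteq> i\<close> dsV by auto
        next
          case False
          show ?thesis
          proof (cases "b = i")
            case True
            then have "lab_succ (S \<union> E) (snd (p!a))" using ls nq False ai by simp
            then have "lab_succ E (snd (p!a))" using ls_un_right[OF fS fE] conjunct1[OF cI] by blast
            then show ?thesis using I2[of a i] e len a True nq False ai by auto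
          next
            case False
            then show ?thesis using I2[of a b] ls nq \<open>a \<noteq> i\<close> ai a b by auto
          qed
        qed
      next
        fix a b assume ab: "a < b" and b: "b < length ?q" and da: "fst (?q!a) = Diag" and db: "fst (?q!b) = Diag"
          and na: "snd (?q!a) \<noteq> {}" and nb: "snd (?q!b) \<noteq> {}"
        have ai: "a \<noteq> Suc i" "b \<noteq> Suc i" using na nb nq by auto
        show "Max (snd (?q!b)) < Max (snd (?q!a))"
        proof (cases "a = i")
          case True
          then show ?thesis using I3[of "Suc i" b] ab b da db na nb nq ai s F len by auto
        next
          case False
          show ?thesis
          proof (cases "b = i")
            case True
            then show ?thesis using I3[of a "Suc i"] ab b da db na nb nq ai s F len False by auto
          next
            case False
            then show ?thesis using I3[of a b] ab b da db na nb nq ai \<open>a \<noteq> i\<close> by auto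
          qed
        qed
      qed
      then show ?thesis using q by simp
    next
      case nII: False
      let ?q = "p[i:=(ds,S), Suc i:=(de,E)]"
      have c1: "(lab_succ E S \<and> ds = Hor) = False" using nI by simp
      have c2: "(lab_succ S E \<and> de = Vert) = False" using nII by simp
      have q: "fe_step p i = ?q" unfolding fe_step_cases[OF e s] c1 c2 if_False if_True ..
      define sw where "sw k = (if k = i then Suc i else if k = Suc i then i else k)" for k
      have nq: "\<And>k. ?q ! k = p ! (sw k)"
        using len e s by (auto simp: sw_def)
      have swl: "\<And>k. k < length p \<Longrightarrow> sw k < length p" using len by (auto simp: sw_def)
      have "inv1 ?q"
      proof (rule inv1I)
        fix k assume "k < length ?q" then show "finite (snd (?q!k))" using fin nq swl by auto
      next
        fix a b assume a: "a < length ?q" and b: "b < length ?q" and ls: "lab_succ (snd (?q!b)) (snd (?q!a))"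
        have H: "(fst (p!sw a) = Hor \<longrightarrow> sw b<sw a) \<and> (fst (p!sw a) = Vert \<longrightarrow> sw a<sw b)"
          using I2[of "sw a" "sw b"] a b swl ls nq by simp
        have "finite (snd (?q!a))" using fin nq swl a by simp
        then have aneb: "a \<noteq> b" using ls ls_irrefl by metis
        show "(fst (?q!a) = Hor \<longrightarrow> b<a) \<and> (fst (?q!a) = Vert \<longrightarrow> a<b)"
        proof (cases "a = i \<and> b = Suc i \<or> a = Suc i \<and> b = i")
          case True
          then show ?thesis
          proof
            assume ab: "a = i \<and> b = Suc i"
            then have "lab_succ E S" "fst (?q!a) = ds" using ls len by auto
            then show ?thesis using nI dsV by auto
          next
            assume ab: "a = Suc i \<and> b = i"
            then have "lab_succ S E" "fst (?q!a) = de" using ls len by auto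
            then show ?thesis using nII deH by auto
          qed
        next
          case False
          have o: "(sw b < sw a) = (b < a)" "(sw a < sw b) = (a<b)" using False aneb by (auto simp: sw_def)
          show ?thesis using H nq o by simp
        qed
      next
        fix a b assume ab: "a < b" and b: "b < length ?q" and da: "fst (?q!a) = Diag" and db: "fst (?q!b) = Diag"
          and na: "snd (?q!a) \<noteq> {}" and nb: "snd (?q!b) \<noteq> {}"
        have "\<not> (a = i \<and> b = Suc i)" using da db nq e s dne by (auto simp: sw_def)
        then have "sw a < sw b" using ab by (auto simp: sw_def)
        then show "Max (snd (?q!b)) < Max (snd (?q!a))" using I3[of "sw a" "sw b"] b swl da db na nb nq by auto
      qed
      then show ?thesis using q by simp
    qed
  qed
qed

lemma inv_run: "inv1 p \<Longrightarrow> fe_valid p ts \<Longrightarrow> inv1 (fe_run p ts)"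
  by (induction ts arbitrary: p) (auto simp: inv_step)

lemma last_in_block:
  assumes "distinct (x @ concat A')" "y \<in> set x" "y \<in> last ` set (x # A')" "\<forall>z\<in>set A'. z \<noteq> []"
  shows "y = last x"
proof (rule ccontr)
  assume "y \<noteq> last x"
  then obtain z where z: "z \<in> set A'" "y = last z" using assms(3) by auto
  then have "z \<noteq> []" using assms(4) by blast
  then have "y \<in> set z" using z(2) last_in_set by blast
  then have "y \<in> set (concat A')" using z(1) by auto
  then show False using assms(1,2) by auto
qed

lemma ends_order:
  "distinct (concat A) \<Longrightarrow> \<forall>x\<in>set A. x\<noteq>[] \<Longrightarrow> sorted_wrt (>) (map last A) \<Longrightarrow> a<b \<Longrightarrow>
   b<length (concat A) \<Longrightarrow> concat A!a \<in> last ` set A \<Longrightarrow> concat A!b \<in> last ` set A \<Longrightarrow>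
   concat A!b < concat A!a"
proof (induction A arbitrary: a b)
  case Nil
  then show ?case by simp
next
  case (Cons x A')
  have d: "distinct (x @ concat A')" using Cons.prems by simp
  have ne: "\<forall>z\<in>set A'. z \<noteq> []" using Cons.prems by simp
  show ?case
  proof (cases "b < length x")
    case True
    then have "a < length x" using Cons.prems by simp
    have ca: "concat (x#A') ! a = x!a" and cb: "concat (x#A') ! b = x!b"
      using True \<open>a < length x\<close> by (simp_all add: nth_append)
    have "x!a \<in> set x" "x!b \<in> set x" using True \<open>a < length x\<close> by simp_all
    then have "x!a = last x" "x!b = last x"
      using last_in_block[OF d _ _ ne] Cons.prems(6,7) ca cb by simp_all
    moreover have "distinct x" using d by simp
    ultimately have "a = b" using True \<open>a < length x\<close> nth_eq_iff_index_eq by metis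
    then show ?thesis using Cons.prems(4) by simp
  next
    case bx: False
    have yb: "concat (x#A') ! b = concat A' ! (b - length x)" using bx by (simp add: nth_append)
    have bl: "b - length x < length (concat A')" using bx Cons.prems(5) by simp
    have yin: "concat A' ! (b - length x) \<in> set (concat A')" using bl by (rule nth_mem)
    have "x \<noteq> []" using Cons.prems(2) by simp
    then have lx: "last x \<in> set x" by (rule last_in_set)
    have disj: "set x \<inter> set (concat A') = {}" using d unfolding distinct_append by (elim conjE)
    have nb: "concat A' ! (b - length x) \<noteq> last x" using yin lx disj by (metis IntI empty_iff)
    have "concat A' ! (b - length x) \<in> last ` set (x # A')" using Cons.prems(7) yb by simp
    then have yb2: "concat A' ! (b - length x) \<in> last ` set A'" using nb by simp
    show ?thesis
    proof (cases "a < length x")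
      case True
      have ca: "concat (x#A') ! a = x!a" using True by (simp add: nth_append)
      have "x!a \<in> set x" using True by simp
      then have "x!a = last x" using last_in_block[OF d _ _ ne] Cons.prems(6) ca by simp
      then have ya: "concat (x#A') ! a = last x" using ca by simp
      obtain z where "z \<in> set A'" "concat A' ! (b - length x) = last z" using yb2 by auto
      then show ?thesis using ya yb Cons.prems(3) by auto
    next
      case False
      have ya: "concat (x#A') ! a = concat A' ! (a - length x)" using False by (simp add: nth_append)
      have al: "a - length x < length (concat A')" using bl Cons.prems(4) False by simp
      have ain: "concat A' ! (a - length x) \<in> set (concat A')" using al by (rule nth_mem)
      have na: "concat A' ! (a - length x) \<noteq> last x" using ain lx disj by (metis IntI empty_iff)
      have "concat A' ! (a - length x) \<in> last ` set (x # A')" using Cons.prems(6) ya by simp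
      then have ya2: "concat A' ! (a - length x) \<in> last ` set A'" using na by simp
      have "concat A' ! (b - length x) < concat A' ! (a - length x)"
        using Cons.IH[of "a - length x" "b - length x"] d ne Cons.prems(3) bl ya2 yb2 False bx Cons.prems(4)
        by simp
      then show ?thesis using ya yb by simp
    qed
  qed
qed

lemma init_inv:
  assumes d: "distinct (concat A)" and ne: "\<forall>x\<in>set A. x\<noteq>[]" and so: "sorted_wrt (>) (map last A)"
  shows "inv1 (fe_init A)"
proof -
  define w where "w = concat A"
  have len: "length (fe_init A) = length w - 1" by (simp add: fe_init_def w_def asm_word_def Let_def)
  have nth: "fe_init A ! k = (dir_of (if w!k \<in> last ` set A then LL else if is_increase w k then LH else L0), {w!k})"
    if "k < length w - 1" for k
    using that by (simp add: fe_init_def XA_def w_def asm_word_def block_ends_def Let_def)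
  show ?thesis
  proof (rule inv1I)
    fix k assume "k < length (fe_init A)" then show "finite (snd (fe_init A ! k))" using len nth by simp
  next
    fix a b assume a: "a < length (fe_init A)" and b: "b < length (fe_init A)"
      and ls: "lab_succ (snd (fe_init A ! b)) (snd (fe_init A ! a))"
    have wb: "w!b = w!a + 1" using ls a b len nth by (simp add: lab_succ_def)
    have dw: "distinct w" using d w_def by simp
    show "(fst (fe_init A ! a) = Hor \<longrightarrow> b<a) \<and> (fst (fe_init A ! a) = Vert \<longrightarrow> a<b)"
    proof (intro conjI impI)
      assume "fst (fe_init A ! a) = Hor"
      then have "\<not> is_increase w a" using a len nth by (auto split: if_splits)
      then have "\<not> a < b" using wb b len unfolding is_increase_def by auto
      moreover have "a \<noteq> b" using wb by auto
      ultimately show "b < a" by simp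
    next
      assume "fst (fe_init A ! a) = Vert"
      then have "is_increase w a" using a len nth by (auto split: if_splits)
      then obtain j where j: "a < j" "j < length w" "w!j = w!a + 1" unfolding is_increase_def by auto
      moreover have bw: "b < length w" using b len by simp
      moreover have "w!j = w!b" using j wb by simp
      ultimately have "j = b" using nth_eq_iff_index_eq[OF dw j(2) bw] by simp
      then show "a < b" using j by simp
    qed
  next
    fix a b assume ab: "a < b" and b: "b < length (fe_init A)" and da: "fst (fe_init A ! a) = Diag"
      and db: "fst (fe_init A ! b) = Diag" and "snd (fe_init A ! a) \<noteq> {}" "snd (fe_init A ! b) \<noteq> {}"
    have a: "a < length w - 1" using ab b len by simp
    have "w!a \<in> last ` set A" using da nth[OF a] by (auto split: if_splits)
    moreover have "w!b \<in> last ` set A" using db nth b len by (auto split: if_splits)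
    ultimately have "w!b < w!a" using ends_order[OF d ne so ab] b len w_def by simp
    then show "Max (snd (fe_init A ! b)) < Max (snd (fe_init A ! a))" using nth a b len by simp
  qed
qed

theorem lemma3p5:
  fixes n r :: nat and A :: "nat list list" and ts :: "nat list" and i j :: nat
  assumes "r \<le> n"
    and "assemblee (n + 1) (r + 1) A"
    and "is_tiling_order A ts"
    and "i < length (fe_final A ts)" and "j < length (fe_final A ts)"
    and "lab_succ (snd (fe_final A ts ! j)) (snd (fe_final A ts ! i))"
  shows "(fst (fe_final A ts ! i) = Hor \<and> fst (fe_final A ts ! j) = Hor \<longrightarrow> j < i)
       \<and> (fst (fe_final A ts ! i) = Vert \<and> fst (fe_final A ts ! j) = Vert \<longrightarrow> i < j)
       \<and> (fst (fe_final A ts ! i) = Diag \<and> fst (fe_final A ts ! j) = Diag \<longrightarrow> j < i)"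
proof -
  let ?p = "fe_final A ts"
  have d: "distinct (concat A)" and ne: "\<forall>x\<in>set A. x\<noteq>[]" and so: "sorted_wrt (>) (map last A)"
    using assms(2) by (auto simp: assemblee_def)
  have inv: "inv1 ?p" using inv_run[OF init_inv[OF d ne so]] assms(3)
    by (simp add: is_tiling_order_def fe_final_def)
  have fin: "\<And>k. k < length ?p \<Longrightarrow> finite (snd (?p!k))" using inv[unfolded inv1_def, THEN conjunct1] by blast
  have I2: "(fst (?p!i) = Hor \<longrightarrow> j<i) \<and> (fst (?p!i) = Vert \<longrightarrow> i<j)"
    using inv[unfolded inv1_def, THEN conjunct2, THEN conjunct1] assms(4,5,6) by blast
  have I3: "\<And>a b. a<b \<Longrightarrow> b<length ?p \<Longrightarrow> fst(?p!a)=Diag \<Longrightarrow> fst(?p!b)=Diag \<Longrightarrow> snd(?p!a)\<noteq>{} \<Longrightarrow>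
    snd(?p!b)\<noteq>{} \<Longrightarrow> Max(snd(?p!b)) < Max(snd(?p!a))" using inv[unfolded inv1_def, THEN conjunct2, THEN conjunct2] by blast
  note F = ls_facts[OF fin[OF assms(5)] fin[OF assms(4)] assms(6)]
  have "j < i" if "fst (?p!i) = Diag" "fst (?p!j) = Diag"
  proof (rule ccontr)
    assume "\<not> j < i"
    moreover have "i \<noteq> j" using ls_irrefl fin assms(4,6) by metis
    ultimately have "i < j" by simp
    then have "Max (snd (?p!j)) < Max (snd (?p!i))" using I3 that F assms(5) by blast
    then show False using F by simp
  qed
  then show ?thesis using I2 by auto
qed

end
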